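(* Let $\mathcal{S}$ be a discrete subgroup of $O(n+1)$. Then $\mathcal{S}$ satisfies the spanning property if and only if it satisfies the bounded ratio condition $$\sup_{a\in\mathbb{S}^n}\gamma_a<\infty,\qquad \gamma_a:=\max_{\mathbb{S}^n}h_a\Big/\min_{\mathbb{S}^n}h_a,$$ where $h_a$ is the support function of $P_a=\mathrm{conv}\{\phi(a):\phi\in\mathcal{S}\}$.
   Context: The spanning property: for every $a\in\mathbb{S}^n$, $P_a$ is a non-degenerate $(n+1)$-dimensional polytope in $\mathbb{R}^{n+1}$. The support function of a compact convex set $K$ is $h(x)=\max\{z\cdot x:z\in K\}$, $x\in\mathbb{S}^n$. *)

theory Defs
  imports "HOL-Analysis.Analysis"
begin

text \<open>Orthogonal group O(n+1) realised as orthogonal matrices acting on real^'n,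
  where CARD('n) = n+1.\<close>
definition orth_subgroup :: "(real^'n^'n) set \<Rightarrow> bool" where
  "orth_subgroup S \<longleftrightarrow> S \<subseteq> {A. orthogonal_matrix A} \<and> mat 1 \<in> S \<and>
     (\<forall>A\<in>S. \<forall>B\<in>S. A ** B \<in> S) \<and> (\<forall>A\<in>S. matrix_inv A \<in> S)"

definition support_function :: "(real^'n) set \<Rightarrow> real^'n \<Rightarrow> real" where
  "support_function K x = Sup ((\<lambda>z. z \<bullet> x) ` K)"

definition orbit_polytope :: "(real^'n^'n) set \<Rightarrow> real^'n \<Rightarrow> (real^'n) set" where
  "orbit_polytope S a = convex hull ((\<lambda>A. A *v a) ` S)"

definition spanning_property :: "(real^'n^'n) set \<Rightarrow> bool" where
  "spanning_property S \<longleftrightarrow> (\<forall>a \<in> sphere 0 1.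
     polytope (orbit_polytope S a) \<and> aff_dim (orbit_polytope S a) = int CARD('n))"

text \<open>gamma_a = max_{S^n} h_a / min_{S^n} h_a, meaningful (finite) only when min h_a > 0.\<close>
definition gamma_ratio :: "(real^'n^'n) set \<Rightarrow> real^'n \<Rightarrow> real" where
  "gamma_ratio S a =
     Sup (support_function (orbit_polytope S a) ` sphere 0 1) /
     Inf (support_function (orbit_polytope S a) ` sphere 0 1)"

definition bounded_ratio_condition :: "(real^'n^'n) set \<Rightarrow> bool" where
  "bounded_ratio_condition S \<longleftrightarrow> (\<exists>M::real. \<forall>a \<in> sphere 0 1.
     Inf (support_function (orbit_polytope S a) ` sphere 0 1) > 0 \<and> gamma_ratio S a \<le> M)"

end

theory Submission
  imports Defs
begin

lemma orth_inner:
  fixes A :: "real^'n^'n"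
  assumes "orthogonal_matrix A"
  shows "(A *v x) \<bullet> (A *v y) = x \<bullet> y"
proof -
  have "(A *v x) \<bullet> (A *v y) = ((A *v x) v* A) \<bullet> y" by (simp add: dot_lmul_matrix)
  also have "(A *v x) v* A = (transpose A ** A) *v x"
    by (simp add: matrix_vector_mul_assoc[symmetric])
  also have "\<dots> = x" using assms by (simp add: orthogonal_matrix_def)
  finally show ?thesis .
qed

lemma orth_norm:
  fixes A :: "real^'n^'n"
  assumes "orthogonal_matrix A"
  shows "norm (A *v x) = norm x"
  using orth_inner[OF assms, of x x] by (simp add: norm_eq_sqrt_inner)

lemma row_mult: "(M ** A) $ i = (M $ i) v* A"
  by (simp add: vec_eq_iff matrix_matrix_mult_def vector_matrix_mult_def)

lemma norm_mult_orth:
  fixes A M :: "real^'n^'n"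
  assumes "orthogonal_matrix A"
  shows "norm (M ** A) = norm M"
proof -
  have "orthogonal_matrix (transpose A)" using assms by simp
  then have "\<And>i. norm ((M ** A) $ i) = norm (M $ i)"
    using orth_norm[of "transpose A"] by (simp add: row_mult)
  then show ?thesis by (simp add: norm_vec_def)
qed

lemma sub_transpose:
  assumes "orth_subgroup S" "A \<in> S"
  shows "transpose A \<in> S" "orthogonal_matrix A"
proof -
  show oA: "orthogonal_matrix A" using assms unfolding orth_subgroup_def by auto
  have "matrix_inv A \<in> S" using assms unfolding orth_subgroup_def by auto
  moreover have "matrix_inv A = transpose A"
  proof -
    have ex: "\<exists>A'. A ** A' = mat 1 \<and> A' ** A = mat 1"
      using oA by (auto simp: orthogonal_matrix_def)
    have "A ** matrix_inv A = mat 1 \<and> matrix_inv A ** A = mat 1"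
      unfolding matrix_inv_def by (rule someI_ex[OF ex])
    then have "transpose A ** (A ** matrix_inv A) = transpose A" by simp
    then show ?thesis using oA by (simp add: matrix_mul_assoc orthogonal_matrix_def)
  qed
  ultimately show "transpose A \<in> S" by simp
qed

lemma sub_mult:
  assumes "orth_subgroup S" "A \<in> S" "B \<in> S"
  shows "A ** B \<in> S"
  using assms unfolding orth_subgroup_def by auto

lemma sub_one:
  assumes "orth_subgroup S"
  shows "mat 1 \<in> S"
  using assms unfolding orth_subgroup_def by auto

lemma diff_mult: "((B::real^'n^'n) - A) ** C = B ** C - A ** C"
  by (simp add: vec_eq_iff matrix_matrix_mult_def sum_subtractf algebra_simps)

lemma sub_finite:
  fixes S :: "(real^'n^'n) set"
  assumes G: "orth_subgroup S" and D: "discrete S"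
  shows "finite S"
proof (rule ccontr)
  assume inf: "infinite S"
  have "S \<subseteq> cball 0 (norm (mat 1 :: real^'n^'n))"
  proof
    fix A assume "A \<in> S"
    then have "norm (mat 1 ** A) = norm (mat 1 :: real^'n^'n)"
      using sub_transpose[OF G] norm_mult_orth by blast
    then show "A \<in> cball 0 (norm (mat 1 :: real^'n^'n))" by simp
  qed
  then obtain L where "L islimpt S"
    using Heine_Borel_imp_Bolzano_Weierstrass[OF compact_cball inf] by blast
  then have lim: "\<And>e. e > 0 \<Longrightarrow> \<exists>x'\<in>S. x' \<noteq> L \<and> dist x' L < e"
    by (simp add: islimpt_approachable)
  have "mat 1 isolated_in S" using D sub_one[OF G] by (simp add: discrete_def)
  then obtain d where d: "d > 0" "\<And>y. y \<in> S \<Longrightarrow> dist (mat 1) y < d \<Longrightarrow> y = mat 1"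
    using isolated_inE_dist by blast
  obtain A where A: "A \<in> S" "A \<noteq> L" "dist A L < d/2" using lim[of "d/2"] d by auto
  obtain B where B: "B \<in> S" "B \<noteq> L" "dist B L < min (d/2) (dist A L)"
    using lim[of "min (d/2) (dist A L)"] d A by auto
  have AB: "A \<noteq> B" using B by auto
  have dAB: "dist A B < d" using A B dist_triangle_half_r[of L A d B] by (simp add: dist_commute)
  have oB: "orthogonal_matrix (transpose B)" using sub_transpose[OF G B(1)] by simp
  have C: "A ** transpose B \<in> S" using sub_mult[OF G A(1) sub_transpose(1)[OF G B(1)]] .
  have "dist (mat 1) (A ** transpose B) = norm ((B - A) ** transpose B)"
    using sub_transpose(2)[OF G B(1)]
    by (simp add: dist_norm diff_mult orthogonal_matrix_def)
  also have "\<dots> = dist A B" using norm_mult_orth[OF oB] by (simp add: dist_norm norm_minus_commute)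
  finally have "A ** transpose B = mat 1" using d(2)[OF C] dAB by simp
  then have "A ** transpose B ** B = B" by simp
  then have "A = B" using sub_transpose(2)[OF G B(1)]
    by (metis orthogonal_matrix matrix_mul_assoc matrix_mul_rid)
  with AB show False by simp
qed


lemma support_orbit:
  fixes S :: "(real^'n^'n) set"
  assumes "finite S" "S \<noteq> {}"
  shows "support_function (orbit_polytope S a) x = Max ((\<lambda>A. (A *v a) \<bullet> x) ` S)"
proof -
  let ?V = "(\<lambda>A. A *v a) ` S"
  let ?M = "Max ((\<lambda>A. (A *v a) \<bullet> x) ` S)"
  have "?M \<in> (\<lambda>A. (A *v a) \<bullet> x) ` S" using assms by (intro Max_in) auto
  then obtain A0 where A0: "A0 \<in> S" "(A0 *v a) \<bullet> x = ?M" by auto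
  have le: "\<forall>A\<in>S. (A *v a) \<bullet> x \<le> ?M" using assms by auto
  have "{z. z \<bullet> x \<le> ?M} = {z. x \<bullet> z \<le> ?M}" by (simp add: inner_commute)
  then have cvx: "convex {z. z \<bullet> x \<le> ?M}" using convex_halfspace_le[of x ?M] by simp
  have "convex hull ?V \<subseteq> {z. z \<bullet> x \<le> ?M}"
    by (rule hull_minimal) (use le cvx in auto)
  then have "\<forall>y\<in>(\<lambda>z. z \<bullet> x) ` (convex hull ?V). y \<le> ?M" by auto
  moreover have "?M \<in> (\<lambda>z. z \<bullet> x) ` (convex hull ?V)"
    using A0 hull_subset[of ?V convex] by (metis image_eqI subsetD)
  ultimately show ?thesis
    unfolding support_function_def orbit_polytope_def
    by (metis cSup_eq_maximum)
qed

lemma hyperplane_lowdim: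
  fixes V :: "(real^'n) set"
  assumes "V \<subseteq> {z. u \<bullet> z = b}" "u \<noteq> 0"
  shows "aff_dim (convex hull V) < int CARD('n)"
proof -
  have "aff_dim (convex hull V) = aff_dim V" by (rule aff_dim_convex_hull)
  also have "\<dots> \<le> aff_dim {z. u \<bullet> z = b}" by (rule aff_dim_subset[OF assms(1)])
  also have "\<dots> = int CARD('n) - 1" using assms(2) by simp
  finally show ?thesis by simp
qed

lemma sum_invariant:
  fixes S :: "(real^'n^'n) set"
  assumes G: "orth_subgroup S" and F: "finite S" and B: "B \<in> S"
  shows "B *v (\<Sum>A\<in>S. A *v a) = (\<Sum>A\<in>S. A *v a)"
proof -
  have "B *v (\<Sum>A\<in>S. A *v a) = (\<Sum>A\<in>S. B *v (A *v a))"
    using linear_sum[OF matrix_vector_mul_linear[of B]] by simp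
  also have "\<dots> = (\<Sum>A\<in>S. (B ** A) *v a)" by (simp add: matrix_vector_mul_assoc)
  also have "\<dots> = (\<Sum>A\<in>(\<lambda>A. B ** A) ` S. A *v a)"
  proof -
    have "inj_on (\<lambda>A. B ** A) S"
    proof
      fix X Y assume "X \<in> S" "Y \<in> S" "B ** X = B ** Y"
      then have "transpose B ** (B ** X) = transpose B ** (B ** Y)" by simp
      then show "X = Y" using sub_transpose(2)[OF G B]
        by (simp add: matrix_mul_assoc orthogonal_matrix)
    qed
    then show ?thesis by (simp add: sum.reindex)
  qed
  also have "(\<lambda>A. B ** A) ` S = S"
  proof
    show "(\<lambda>A. B ** A) ` S \<subseteq> S" using sub_mult[OF G B] by auto
    show "S \<subseteq> (\<lambda>A. B ** A) ` S"
    proof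
      fix X assume X: "X \<in> S"
      have "X = B ** (transpose B ** X)" using sub_transpose(2)[OF G B]
        by (simp add: matrix_mul_assoc orthogonal_matrix_def)
      moreover have "transpose B ** X \<in> S" using sub_mult[OF G sub_transpose(1)[OF G B] X] .
      ultimately show "X \<in> (\<lambda>A. B ** A) ` S" by blast
    qed
  qed
  finally show ?thesis .
qed

lemma full_imp_pos:
  fixes S :: "(real^'n^'n) set"
  assumes G: "orth_subgroup S" and F: "finite S"
    and full: "aff_dim (orbit_polytope S a) = int CARD('n)" and x: "x \<noteq> 0"
  shows "Max ((\<lambda>A. (A *v a) \<bullet> x) ` S) > 0"
proof (rule ccontr)
  have Sne: "S \<noteq> {}" using sub_one[OF G] by auto
  assume "\<not> ?thesis"
  then have le: "\<forall>A\<in>S. (A *v a) \<bullet> x \<le> 0" using F Sne by (simp add: not_less Max_le_iff)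
  define c where "c = (\<Sum>A\<in>S. A *v a)"
  have inv: "\<And>A. A \<in> S \<Longrightarrow> A *v c = c" unfolding c_def using sum_invariant[OF G F] by blast
  have c0: "c = 0"
  proof (rule ccontr)
    assume "c \<noteq> 0"
    have "(\<lambda>A. A *v a) ` S \<subseteq> {z. c \<bullet> z = a \<bullet> c}"
    proof
      fix z assume "z \<in> (\<lambda>A. A *v a) ` S"
      then obtain A where "A \<in> S" "z = A *v a" by auto
      then have "c \<bullet> z = (A *v c) \<bullet> (A *v a)" using inv by simp
      also have "\<dots> = a \<bullet> c" using orth_inner[OF sub_transpose(2)[OF G \<open>A \<in> S\<close>]]
        by (simp add: inner_commute)
      finally show "z \<in> {z. c \<bullet> z = a \<bullet> c}" by simp
    qed
    from hyperplane_lowdim[OF this \<open>c \<noteq> 0\<close>] full show False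
      by (simp add: orbit_polytope_def)
  qed
  have "(\<Sum>A\<in>S. (A *v a) \<bullet> x) = c \<bullet> x" unfolding c_def by (simp add: inner_sum_left)
  then have "(\<Sum>A\<in>S. - ((A *v a) \<bullet> x)) = 0" using c0 by (simp add: sum_negf)
  then have "\<forall>A\<in>S. - ((A *v a) \<bullet> x) = 0"
    using sum_nonneg_eq_0_iff[OF F, of "\<lambda>A. - ((A *v a) \<bullet> x)"] le by auto
  then have "(\<lambda>A. A *v a) ` S \<subseteq> {z. x \<bullet> z = 0}" by (auto simp: inner_commute)
  from hyperplane_lowdim[OF this x] full show False
    by (simp add: orbit_polytope_def)
qed

lemma pos_imp_full:
  fixes S :: "(real^'n^'n) set"
  assumes G: "orth_subgroup S" and F: "finite S"
    and pos: "\<And>x. x \<in> sphere 0 1 \<Longrightarrow> Max ((\<lambda>A. (A *v a) \<bullet> x) ` S) > 0"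
  shows "aff_dim (orbit_polytope S a) = int CARD('n)"
proof (rule ccontr)
  have Sne: "S \<noteq> {}" using sub_one[OF G] by auto
  assume ne: "aff_dim (orbit_polytope S a) \<noteq> int CARD('n)"
  have "aff_dim (orbit_polytope S a) \<le> int DIM(real^'n)" by (rule aff_dim_le_DIM)
  with ne have "aff_dim (orbit_polytope S a) < int DIM(real^'n)" by simp
  then obtain u b where ub: "u \<noteq> 0" "orbit_polytope S a \<subseteq> {x. u \<bullet> x = b}"
    by (rule aff_lowdim_subset_hyperplane)
  have sub: "\<forall>A\<in>S. u \<bullet> (A *v a) = b"
    using ub(2) hull_subset[of "(\<lambda>A. A *v a) ` S" convex] unfolding orbit_polytope_def by auto
  define v where "v = u /\<^sub>R norm u"
  have v1: "v \<in> sphere 0 1" "-v \<in> sphere 0 1" using ub(1) by (auto simp: v_def)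
  have e1: "(\<lambda>A. (A *v a) \<bullet> v) ` S = {b / norm u}"
    using sub Sne by (auto simp: v_def inner_commute divide_inverse)
  have e2: "(\<lambda>A. (A *v a) \<bullet> (-v)) ` S = {- (b / norm u)}"
    using sub Sne by (auto simp: v_def inner_commute divide_inverse)
  show False using pos[OF v1(1)] pos[OF v1(2)] unfolding e1 e2 by simp
qed

lemma cont_one:
  fixes A :: "real^'n^'n"
  shows "continuous_on UNIV (\<lambda>p::(real^'n) \<times> (real^'n). (A *v fst p) \<bullet> snd p)"
proof -
  have "continuous_on UNIV (\<lambda>p::(real^'n) \<times> (real^'n). A *v fst p)"
    using continuous_on_compose[OF continuous_on_fst[OF continuous_on_id] matrix_vector_mult_linear_continuous_on[of _ A]]
    by (simp add: o_def)
  then show ?thesis by (intro continuous_on_inner continuous_on_snd continuous_on_id)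
qed

lemma cont_max:
  fixes S :: "(real^'n^'n) set"
  assumes "finite S" "S \<noteq> {}"
  shows "continuous_on UNIV (\<lambda>p::(real^'n) \<times> (real^'n). Max ((\<lambda>A. (A *v fst p) \<bullet> snd p) ` S))"
  using assms
proof (induction S rule: finite_ne_induct)
  case (singleton A)
  then show ?case by (simp add: cont_one)
next
  case (insert A T)
  have eq: "(\<lambda>p::(real^'n) \<times> (real^'n). Max ((\<lambda>A. (A *v fst p) \<bullet> snd p) ` insert A T)) =
    (\<lambda>p. max ((A *v fst p) \<bullet> snd p) (Max ((\<lambda>A. (A *v fst p) \<bullet> snd p) ` T)))"
    using insert by (simp add: Max_insert)
  show ?case unfolding eq by (intro continuous_on_max cont_one insert.IH)
qed

lemma bound1:
  fixes A :: "real^'n^'n"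
  assumes "orthogonal_matrix A" "norm a = 1" "norm x = 1"
  shows "\<bar>(A *v a) \<bullet> x\<bar> \<le> 1"
  using Cauchy_Schwarz_ineq2[of "A *v a" x] orth_norm[OF assms(1)] assms by simp

theorem proposition2p1:
  fixes S :: "(real^'n^'n) set"
  assumes "orth_subgroup S" and "discrete S"
  shows "spanning_property S \<longleftrightarrow> bounded_ratio_condition S"
proof -
  note G = assms(1)
  have F: "finite S" using sub_finite assms by blast
  have Sne: "S \<noteq> {}" using sub_one[OF G] by auto
  define H where "H = (\<lambda>a x. Max ((\<lambda>A. (A *v a) \<bullet> x) ` S))"
  have h: "\<And>a. support_function (orbit_polytope S a) = H a"
    using support_orbit[OF F Sne] by (auto simp: H_def)
  have poly: "\<And>a. polytope (orbit_polytope S a)"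
    unfolding polytope_def orbit_polytope_def using F by blast
  have sne: "sphere (0::real^'n) 1 \<noteq> {}"
    using norm_axis_1[of undefined] by (metis mem_sphere_0 empty_iff)
  have Hb: "\<And>a x. a \<in> sphere 0 1 \<Longrightarrow> x \<in> sphere 0 1 \<Longrightarrow> \<bar>H a x\<bar> \<le> 1"
  proof -
    fix a x :: "real^'n" assume "a \<in> sphere 0 1" "x \<in> sphere 0 1"
    then have "\<forall>A\<in>S. \<bar>(A *v a) \<bullet> x\<bar> \<le> 1" using bound1 sub_transpose(2)[OF G] by auto
    moreover have "H a x \<in> (\<lambda>A. (A *v a) \<bullet> x) ` S" unfolding H_def using F Sne by (intro Max_in) auto
    ultimately show "\<bar>H a x\<bar> \<le> 1" by auto
  qed
  show ?thesis
  proof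
    assume sp: "spanning_property S"
    let ?K = "sphere (0::real^'n) 1 \<times> sphere (0::real^'n) 1"
    have "continuous_on ?K (\<lambda>p. H (fst p) (snd p))"
      using continuous_on_subset[OF cont_max[OF F Sne]] unfolding H_def by blast
    then obtain p0 where p0: "p0 \<in> ?K" "\<And>p. p \<in> ?K \<Longrightarrow> H (fst p0) (snd p0) \<le> H (fst p) (snd p)"
      using continuous_attains_inf[of ?K "\<lambda>p. H (fst p) (snd p)"] sne
      by (auto simp: compact_Times)
    define \<delta> where "\<delta> = H (fst p0) (snd p0)"
    have dpos: "\<delta> > 0"
    proof -
      have "aff_dim (orbit_polytope S (fst p0)) = int CARD('n)"
        using sp p0(1) unfolding spanning_property_def by auto
      moreover have "snd p0 \<noteq> 0" using p0(1) by auto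
      ultimately show ?thesis using full_imp_pos[OF G F] unfolding \<delta>_def H_def by blast
    qed
    show "bounded_ratio_condition S"
      unfolding bounded_ratio_condition_def
    proof (intro exI[of _ "1/\<delta>"] ballI conjI)
      fix a :: "real^'n" assume a: "a \<in> sphere 0 1"
      have "Inf (H a ` sphere 0 1) \<ge> \<delta>"
        using sne p0(2)[of "(a, _)"] a unfolding \<delta>_def by (intro cInf_greatest) auto
      then have I: "Inf (H a ` sphere 0 1) \<ge> \<delta>" "Inf (H a ` sphere 0 1) > 0" using dpos by auto
      then show "Inf (support_function (orbit_polytope S a) ` sphere 0 1) > 0" by (simp add: h)
      have Su: "Sup (H a ` sphere 0 1) \<le> 1"
        using sne Hb[OF a] by (intro cSup_least) (auto simp: abs_le_iff)
      have "Sup (H a ` sphere 0 1) / Inf (H a ` sphere 0 1) \<le> 1 / Inf (H a ` sphere 0 1)"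
        using Su I by (intro divide_right_mono) auto
      also have "\<dots> \<le> 1 / \<delta>" using I dpos by (intro divide_left_mono) auto
      finally show "gamma_ratio S a \<le> 1 / \<delta>" unfolding gamma_ratio_def h .
    qed
  next
    assume br: "bounded_ratio_condition S"
    show "spanning_property S"
      unfolding spanning_property_def
    proof (intro ballI conjI poly)
      fix a :: "real^'n" assume a: "a \<in> sphere 0 1"
      have I: "Inf (H a ` sphere 0 1) > 0" using br a unfolding bounded_ratio_condition_def h by blast
      have bb: "bdd_below (H a ` sphere 0 1)"
        unfolding bdd_below_def using Hb[OF a] by (intro exI[of _ "-1"]) (auto simp: abs_le_iff)
      show "aff_dim (orbit_polytope S a) = int CARD('n)"
      proof (rule pos_imp_full[OF G F])
        fix x :: "real^'n" assume x: "x \<in> sphere 0 1"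
        have "Inf (H a ` sphere 0 1) \<le> H a x" using bb x by (intro cInf_lower) auto
        with I show "Max ((\<lambda>A. (A *v a) \<bullet> x) ` S) > 0" unfolding H_def by simp
      qed
    qed
  qed
qed

end
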